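(* Assume (A3), (A5), (A6) below. Let $R_{MV}=\Sigma_{MM}^\dagger\Sigma_{MV}:\mathcal H\to\mathcal M$ and $R_{VM}$ its adjoint. For $m\in\Omega_M$ let $\lambda(m)\in\mathcal H$ be the Riesz representer of the bounded functional $v\mapsto (R_{MV}v)(m)$. Define the weak conditional mean $$\Psi(m)=\mathbb E[V_I\,\|\,M=m]:=\mathbb EV_I+\lambda(m)-\mathbb E[\lambda(M)].$$ Then: (1) for all $v\in\mathcal H$, $\langle\Psi(m),v\rangle_{\mathcal H}=\langle\mathbb EV_I,v\rangle_{\mathcal H}+(R_{MV}v)(m)-\mathbb E[(R_{MV}v)(M)]$; (2) $\Psi(m)=\mathbb EV_I+R_{VM}(\tau_M(m)-\mu_M)=\mathbb EV_I+\Sigma_{VM}\Sigma_{MM}^\dagger(\tau_M(m)-\mu_M)$.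
   Context: Notation: $(a\otimes b)h=\langle b,h\rangle a$. Expectations are Bochner integrals. $\Sigma^\dagger$ is the Moore–Penrose inverse (inverse of $\Sigma$ restricted to $\overline{\mathrm{ran}\Sigma}$). Setting: $\mathcal H$ is a separable Hilbert space. $X$ and $M$ are random elements of separable metric spaces $\Omega_X$ and $\Omega_M$, and $V_I,V_D$ are $\mathcal H$-valued random elements. (A3) $\kappa_M$ and $\kappa_X$ are continuous positive definite kernels on $\Omega_M$ and $\Omega_X$ with separable RKHSs $\mathcal M$ and $\mathcal X$. Write $\tau_M(m)=\kappa_M(\cdot,m)$ and $\tau_X(x)=\kappa_X(\cdot,x)$. (A5) $\mathbb E\kappa_M(M,M)$, $\mathbb E[\kappa_M(M,M)^{1/2}\|V_I\|]$, $\mathbb E\kappa_X(X,X)$, $\mathbb E[\kappa_X(X,X)^{1/2}\|V_D\|]$ and $\mathbb E[\kappa_X(X,X)^{1/2}\|\tau_M(M)\|]$ are finite. With $\mu_M=\mathbb E\tau_M(M)$ and $\mu_X=\mathbb E\tau_X(X)$, define - $\Sigma_{MM}=\mathbb E[(\tau_M(M)-\mu_M)^{\otimes2}]$, and $\Sigma_{XX}$ analogously; - $\Sigma_{XM}=\mathbb E[(\tau_X(X)-\mu_X)\otimes(\tau_M(M)-\mu_M)]$, with $\Sigma_{MX}=\Sigma_{XM}^*$; - $\Sigma_{MV}=\mathbb E[(\tau_M(M)-\mu_M)\otimes(V_I-\mathbb EV_I)]$, with $\Sigma_{VM}=\Sigma_{MV}^*$; - $\Sigma_{XV}=\mathbb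 E[(\tau_X(X)-\mu_X)\otimes(V_D-\mathbb EV_D)]$. (A6) $\mathrm{ran}\Sigma_{XM},\mathrm{ran}\Sigma_{XV}\subset\mathrm{ran}\Sigma_{XX}$ and $\mathrm{ran}\Sigma_{MX},\mathrm{ran}\Sigma_{MV}\subset\mathrm{ran}\Sigma_{MM}$; $\Sigma_{XX}^\dagger\Sigma_{XM}$, $\Sigma_{XX}^\dagger\Sigma_{XV}$ and $\Sigma_{MM}^\dagger\Sigma_{MV}$ are bounded. *)

theory Defs
  imports "HOL-Analysis.Analysis" "HOL-Probability.Probability"
begin

text \<open>Cross-covariance operator E[(A - EA) (x) (B - EB)], applied pointwise:
  (a (x) b) h = <b,h> a, and the Bochner integral of the operator-valued
  integrand applied to h equals the Bochner integral of the applied integrand.\<close>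
definition cov ::
  "'w measure \<Rightarrow> ('w \<Rightarrow> 'b::{real_inner,banach,second_countable_topology})
   \<Rightarrow> ('w \<Rightarrow> 'c::{real_inner,banach,second_countable_topology}) \<Rightarrow> 'c \<Rightarrow> 'b" where
  "cov P A B = (\<lambda>h. integral\<^sup>L P (\<lambda>w. inner (B w - integral\<^sup>L P B) h *\<^sub>R (A w - integral\<^sup>L P A)))"

text \<open>Moore-Penrose inverse: the unique x in the closure of ran T with
  y - T x orthogonal to ran T (for y in ran T this is T restricted to the
  closure of ran T, inverted).  Its natural domain is ran T + (ran T)^perp.\<close>
definition pinv :: "('a::real_inner \<Rightarrow> 'a) \<Rightarrow> 'a \<Rightarrow> 'a" where
  "pinv T y = (THE x. x \<in> closure (range T) \<and> (\<forall>z. inner (y - T x) (T z) = 0))"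

definition pinv_dom :: "('a::real_inner \<Rightarrow> 'a) \<Rightarrow> 'a set" where
  "pinv_dom T = {y. \<exists>x \<in> closure (range T). \<forall>z. inner (y - T x) (T z) = 0}"

definition riesz_rep :: "('h::real_inner \<Rightarrow> real) \<Rightarrow> 'h" where
  "riesz_rep \<phi> = (THE l. \<forall>v. inner l v = \<phi> v)"

end

theory Submission
  imports Defs
begin

lemma inner_ext:
  fixes u w :: "'a::real_inner"
  assumes "\<And>x. inner x u = inner x w" shows "u = w"
proof -
  have "inner (u - w) (u - w) = 0" using assms[of "u - w"] by (simp add: inner_diff_right)
  then show ?thesis by simp
qed

lemma subspace_closure_my:
  fixes S :: "'a::real_normed_vector set"
  assumes "subspace S" shows "subspace (closure S)"
  unfolding subspace_def
proof (intro conjI ballI allI)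
  show "0 \<in> closure S" using assms closure_subset subspace_0 by blast
next
  fix x y assume "x \<in> closure S" "y \<in> closure S"
  then obtain f g where f: "\<forall>n. f n \<in> S" "f \<longlonglongrightarrow> x" and g: "\<forall>n. g n \<in> S" "g \<longlonglongrightarrow> y"
    by (meson closure_sequential)
  have "(\<lambda>n. f n + g n) \<longlonglongrightarrow> x + y" by (intro tendsto_add f g)
  moreover have "\<forall>n. f n + g n \<in> S" using f g assms subspace_add by blast
  ultimately show "x + y \<in> closure S" by (meson closure_sequential)
next
  fix c x assume "x \<in> closure S"
  then obtain f where f: "\<forall>n. f n \<in> S" "f \<longlonglongrightarrow> x"
    by (meson closure_sequential)
  have "(\<lambda>n. c *\<^sub>R f n) \<longlonglongrightarrow> c *\<^sub>R x" by (intro tendsto_scaleR f tendsto_const)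
  moreover have "\<forall>n. c *\<^sub>R f n \<in> S" using f assms subspace_scale by blast
  ultimately show "c *\<^sub>R x \<in> closure S" by (meson closure_sequential)
qed

lemma perp_closure:
  fixes w :: "'a::real_inner"
  assumes "\<forall>s\<in>S. inner w s = 0" "x \<in> closure S"
  shows "inner w x = 0"
proof -
  have "closed {x. inner w x = 0}"
    by (intro closed_Collect_eq continuous_intros)
  then have "closure S \<subseteq> {x. inner w x = 0}"
    using assms(1) by (intro closure_minimal) auto
  then show ?thesis using assms(2) by auto
qed

lemma proj_exists:
  fixes S :: "'a::{real_inner,complete_space} set"
  assumes cl: "closed S" and sub: "subspace S"
  shows "\<exists>p\<in>S. \<forall>s\<in>S. inner (a - p) s = 0"
proof -
  define d where "d = Inf ((\<lambda>s. norm (a - s)) ` S)"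
  have ne: "S \<noteq> {}" using sub subspace_0 by blast
  have bdd: "bdd_below ((\<lambda>s. norm (a - s)) ` S)" by (rule bdd_belowI[of _ 0]) auto
  have d_le: "d \<le> norm (a - s)" if "s \<in> S" for s
    unfolding d_def using bdd that by (intro cInf_lower) auto
  have d0: "0 \<le> d" unfolding d_def using ne by (intro cInf_greatest) auto
  have "\<exists>s\<in>S. norm (a - s)^2 < d^2 + inverse (real (Suc n))" for n
  proof -
    define e where "e = sqrt (d^2 + inverse (real (Suc n)))"
    have "d^2 < d^2 + inverse (real (Suc n))" by simp
    then have "sqrt (d^2) < e" unfolding e_def by (rule real_sqrt_less_mono)
    then have "d < e" using d0 by simp
    then obtain s where s: "s \<in> S" "norm (a - s) < e"
      using cInf_lessD[of "(\<lambda>s. norm (a - s)) ` S" e] ne unfolding d_def by auto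
    have "norm (a - s)^2 < e^2" using s(2) by (intro power_strict_mono) auto
    also have "e^2 = d^2 + inverse (real (Suc n))" unfolding e_def
      by (simp add: add_nonneg_nonneg)
    finally show ?thesis using s by auto
  qed
  then obtain f where f: "\<And>n. f n \<in> S" "\<And>n. norm (a - f n)^2 < d^2 + inverse (real (Suc n))"
    by metis
  have par: "norm (f m - f n)^2 < 2 * inverse (real (Suc n)) + 2 * inverse (real (Suc m))" for m n
  proof -
    define x where "x = a - f n"
    define y where "y = a - f m"
    have mid: "(1/2) *\<^sub>R (f n + f m) \<in> S" using f(1) sub by (simp add: subspace_add subspace_scale)
    have "x + y = 2 *\<^sub>R (a - (1/2) *\<^sub>R (f n + f m))" unfolding x_def y_def
      by (simp add: algebra_simps scaleR_2)
    then have "norm (x + y)^2 = 4 * norm (a - (1/2) *\<^sub>R (f n + f m))^2"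
      by (simp add: power_mult_distrib)
    moreover have "d^2 \<le> norm (a - (1/2) *\<^sub>R (f n + f m))^2"
      using d_le[OF mid] d0 by (intro power_mono) auto
    ultimately have xy: "4 * d^2 \<le> norm (x + y)^2" by simp
    have pl: "norm (x - y)^2 + norm (x + y)^2 = 2 * norm x ^2 + 2 * norm y ^2"
      by (simp add: power2_norm_eq_inner inner_add inner_diff inner_commute)
    have "x - y = f m - f n" unfolding x_def y_def by simp
    then show ?thesis using pl xy f(2)[of n] f(2)[of m] unfolding x_def y_def by simp
  qed
  have "Cauchy f"
  proof (rule CauchyI)
    fix e :: real assume e: "0 < e"
    obtain N where N: "inverse (real (Suc N)) < e^2 / 4"
      using reals_Archimedean e by (metis divide_pos_pos zero_less_numeral zero_less_power)
    show "\<exists>N. \<forall>m\<ge>N. \<forall>n\<ge>N. norm (f m - f n) < e"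
    proof (intro exI allI impI)
      fix m n assume mn: "N \<le> m" "N \<le> n"
      have "inverse (real (Suc n)) \<le> inverse (real (Suc N))" "inverse (real (Suc m)) \<le> inverse (real (Suc N))"
        using mn by (auto intro!: le_imp_inverse_le)
      then have "norm (f m - f n)^2 < e^2" using par[of m n] N by linarith
      then show "norm (f m - f n) < e" using e by (meson abs_le_square_iff abs_norm_cancel less_le_not_le not_le power2_less_imp_less)
    qed
  qed
  then obtain p where p: "f \<longlonglongrightarrow> p" using Cauchy_convergent_iff convergent_def by blast
  have pS: "p \<in> S" using closed_sequentially[OF cl f(1) p] .
  have "(\<lambda>n. norm (a - f n)^2) \<longlonglongrightarrow> norm (a - p)^2"
    by (intro tendsto_intros p)
  moreover have "(\<lambda>n. d^2 + inverse (real (Suc n))) \<longlonglongrightarrow> d^2 + 0"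
    by (intro tendsto_intros LIMSEQ_inverse_real_of_nat)
  ultimately have "norm (a - p)^2 \<le> d^2 + 0"
    using f(2) by (intro LIMSEQ_le) (auto intro: less_imp_le)
  then have min: "norm (a - p)^2 \<le> norm (a - s)^2" if "s \<in> S" for s
    using d_le[OF that] d0 by (smt (verit) power_mono)
  show ?thesis
  proof (intro bexI[OF _ pS] ballI)
    fix s assume s: "s \<in> S"
    define c where "c = inner (a - p) s"
    have ineq: "2 * t * c \<le> t^2 * inner s s" for t
    proof -
      have "p + t *\<^sub>R s \<in> S" using pS s sub by (simp add: subspace_add subspace_scale)
      from min[OF this] have 1: "norm (a - p)^2 \<le> norm (a - (p + t *\<^sub>R s))^2" .
      have 2: "norm (a - (p + t *\<^sub>R s))^2 = norm (a - p)^2 - 2 * t * c + t^2 * inner s s"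
        unfolding c_def power2_norm_eq_inner
        by (simp add: inner_diff inner_add inner_commute power2_eq_square algebra_simps)
      show ?thesis using 1 2 by linarith
    qed
    show "inner (a - p) s = 0"
    proof (cases "s = 0")
      case True then show ?thesis by simp
    next
      case False
      then have ss: "inner s s > 0" by simp
      have "2 * (c / inner s s) * c \<le> (c / inner s s)^2 * inner s s" by (rule ineq)
      then have "2 * c^2 / inner s s \<le> c^2 / inner s s" using ss by (simp add: power2_eq_square field_simps)
      then have "c^2 \<le> 0" using ss by (simp add: divide_le_cancel)
      then show ?thesis unfolding c_def by simp
    qed
  qed
qed

lemma riesz:
  fixes f :: "'a::{real_inner,complete_space} \<Rightarrow> real"
  assumes bl: "bounded_linear f"
  shows "\<exists>l. \<forall>v. inner l v = f v"
proof (cases "\<forall>v. f v = 0")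
  case True then show ?thesis by (intro exI[of _ 0]) simp
next
  case False
  then obtain a where fa: "f a \<noteq> 0" by auto
  interpret f: bounded_linear f by fact
  let ?K = "{v. f v = 0}"
  have cl: "closed ?K"
    by (intro closed_Collect_eq continuous_on_const f.continuous_on continuous_on_id)
  have sub: "subspace ?K" by (auto simp: subspace_def f.add f.scale f.zero)
  obtain p where p: "p \<in> ?K" "\<forall>s\<in>?K. inner (a - p) s = 0" using proj_exists[OF cl sub] by blast
  define z where "z = a - p"
  have fz: "f z = f a" using p by (simp add: z_def f.diff)
  have zz: "inner z z \<noteq> 0" using fz fa by auto
  show ?thesis
  proof (intro exI[of _ "(f z / inner z z) *\<^sub>R z"] allI)
    fix v
    have "v - (f v / f z) *\<^sub>R z \<in> ?K" using fz fa by (simp add: f.diff f.scale)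
    then have "inner z (v - (f v / f z) *\<^sub>R z) = 0" using p(2) z_def by auto
    then have "inner z v = (f v / f z) * inner z z" by (simp add: inner_diff_right)
    then show "inner ((f z / inner z z) *\<^sub>R z) v = f v" using zz fz fa by (simp add: field_simps)
  qed
qed

lemma adjoint_ex:
  fixes f :: "'a::{real_inner,complete_space} \<Rightarrow> 'b::real_inner"
  assumes bl: "bounded_linear f"
  shows "\<forall>x y. inner (f x) y = inner x (adjoint f y)"
proof -
  interpret f: bounded_linear f by fact
  have "\<forall>y. \<exists>l. \<forall>x. inner l x = inner (f x) y"
  proof
    fix y
    have "bounded_linear (\<lambda>x. inner (f x) y)"
      using bounded_linear_compose[OF bounded_linear_inner_left bl] .
    then show "\<exists>l. \<forall>x. inner l x = inner (f x) y" by (rule riesz)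
  qed
  then obtain g where g: "\<forall>y x. inner (g y) x = inner (f x) y" by metis
  then have "\<exists>f'. \<forall>x y. inner (f x) y = inner x (f' y)" by (metis inner_commute)
  then show ?thesis unfolding adjoint_def by (rule someI_ex)
qed

lemma adjoint_bl:
  fixes f :: "'a::{real_inner,complete_space} \<Rightarrow> 'b::real_inner"
  assumes bl: "bounded_linear f"
  shows "bounded_linear (adjoint f)"
proof -
  interpret f: bounded_linear f by fact
  note A = adjoint_ex[OF bl]
  obtain K where K: "\<And>x. norm (f x) \<le> norm x * K" "K > 0" using f.pos_bounded by blast
  show ?thesis
  proof (rule bounded_linear_intro[where K=K])
    fix x y
    show "adjoint f (x + y) = adjoint f x + adjoint f y"
      by (rule inner_ext) (metis A inner_add_right)
  next
    fix r x
    show "adjoint f (r *\<^sub>R x) = r *\<^sub>R adjoint f x"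
      by (rule inner_ext) (metis A inner_scaleR_right)
  next
    fix y
    have "norm (adjoint f y)^2 = inner (f (adjoint f y)) y" by (simp add: A power2_norm_eq_inner)
    also have "\<dots> \<le> norm (f (adjoint f y)) * norm y" by (rule norm_cauchy_schwarz)
    also have "\<dots> \<le> norm (adjoint f y) * K * norm y" using K by (simp add: mult_right_mono)
    finally have "norm (adjoint f y) * norm (adjoint f y) \<le> norm (adjoint f y) * (K * norm y)"
      by (simp add: power2_eq_square mult.assoc)
    then show "norm (adjoint f y) \<le> norm y * K"
      by (cases "adjoint f y = 0") (use K(2) in \<open>auto simp: mult.commute\<close>)
  qed
qed

lemma pinv_char:
  fixes T :: "'a::real_inner \<Rightarrow> 'a"
  assumes lin: "linear T" and sa: "\<And>x y. inner (T x) y = inner x (T y)"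
    and x: "x \<in> closure (range T)" and r: "\<forall>z. inner (y - T x) (T z) = 0"
  shows "pinv T y = x"
  unfolding pinv_def
proof (rule the_equality)
  show "x \<in> closure (range T) \<and> (\<forall>z. inner (y - T x) (T z) = 0)" using x r by blast
next
  fix x' assume x': "x' \<in> closure (range T) \<and> (\<forall>z. inner (y - T x') (T z) = 0)"
  define d where "d = x' - x"
  have Td: "T d = (y - T x) - (y - T x')" unfolding d_def using lin by (simp add: linear_diff)
  have "\<forall>z. inner (T d) (T z) = 0" using r x' unfolding Td by (simp add: inner_diff_left)
  then have "inner (T d) (T d) = 0" by blast
  then have "T d = 0" by simp
  then have perp: "\<forall>s\<in>range T. inner d s = 0" using sa by (metis image_iff inner_zero_left)
  have "inner d x' = 0" "inner d x = 0" using perp_closure[OF perp] x x' by auto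
  then have "inner d d = 0" unfolding d_def by (simp add: inner_diff_right inner_commute)
  then show "x' = x" unfolding d_def by simp
qed

lemma pinv_range:
  fixes T :: "'a::{real_inner,complete_space} \<Rightarrow> 'a"
  assumes lin: "linear T" and sa: "\<And>x y. inner (T x) y = inner x (T y)"
  shows "T (pinv T (T a)) = T a \<and> pinv T (T a) \<in> closure (range T)"
proof -
  have sub: "subspace (closure (range T))"
    by (intro subspace_closure_my linear_subspace_image[OF lin subspace_UNIV])
  obtain p where p: "p \<in> closure (range T)" "\<forall>s\<in>closure (range T). inner (a - p) s = 0"
    using proj_exists[OF closed_closure sub] by blast
  have "\<forall>z. inner (T (a - p)) z = 0"
    using p(2) closure_subset by (metis sa rangeI subsetD)
  then have "T (a - p) = 0" by (metis inner_eq_zero_iff)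
  then have Tp: "T p = T a" using lin by (simp add: linear_diff)
  have "pinv T (T a) = p" by (rule pinv_char[OF lin sa p(1)]) (simp add: Tp)
  then show ?thesis using Tp p(1) by simp
qed

lemma rank1_int:
  fixes a :: "'w \<Rightarrow> 'a::{real_inner,banach,second_countable_topology}"
    and b :: "'w \<Rightarrow> 'b::{real_inner,banach,second_countable_topology}"
  assumes am: "a \<in> borel_measurable P" and bm: "b \<in> borel_measurable P"
    and i: "integrable P (\<lambda>w. norm (a w) * norm (b w))"
  shows "integrable P (\<lambda>w. inner (a w) x *\<^sub>R b w)"
proof (rule Bochner_Integration.integrable_bound[of P "\<lambda>w. norm (a w) * norm (b w) * norm x"])
  show "integrable P (\<lambda>w. norm (a w) * norm (b w) * norm x)" using i by simp
  show "(\<lambda>w. inner (a w) x *\<^sub>R b w) \<in> borel_measurable P" using am bm by measurable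
  show "AE w in P. norm (inner (a w) x *\<^sub>R b w) \<le> norm (norm (a w) * norm (b w) * norm x)"
  proof (rule AE_I2)
    fix w
    have "norm (inner (a w) x *\<^sub>R b w) = \<bar>inner (a w) x\<bar> * norm (b w)" by simp
    also have "\<dots> \<le> (norm (a w) * norm x) * norm (b w)"
      by (intro mult_right_mono Cauchy_Schwarz_ineq2) auto
    finally show "norm (inner (a w) x *\<^sub>R b w) \<le> norm (norm (a w) * norm (b w) * norm x)"
      by (simp add: algebra_simps)
  qed
qed

theorem proposition1:
  fixes P :: "'w measure"
    and X :: "'w \<Rightarrow> 'ox::{metric_space,second_countable_topology}"
    and M :: "'w \<Rightarrow> 'om::{metric_space,second_countable_topology}"
    and VI VD :: "'w \<Rightarrow> 'h::{real_inner,banach,second_countable_topology}"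
    and kM :: "'om \<Rightarrow> 'om \<Rightarrow> real" and kX :: "'ox \<Rightarrow> 'ox \<Rightarrow> real"
    and tauM :: "'om \<Rightarrow> 'm::{real_inner,banach,second_countable_topology}"
    and tauX :: "'ox \<Rightarrow> 'x::{real_inner,banach,second_countable_topology}"
  assumes P: "prob_space P"
    and X_meas: "X \<in> P \<rightarrow>\<^sub>M borel" and M_meas: "M \<in> P \<rightarrow>\<^sub>M borel"
    and VI_meas: "VI \<in> borel_measurable P" and VD_meas: "VD \<in> borel_measurable P"
    and VI_int: "integrable P VI" and VD_int: "integrable P VD"
    \<comment> \<open>(A3): continuous kernels, RKHS = closed span of the kernel sections,
        evaluation of f at m is inner f (tau m)\<close>
    and kM_cont: "continuous_on UNIV (\<lambda>(a,b). kM a b)"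
    and kX_cont: "continuous_on UNIV (\<lambda>(a,b). kX a b)"
    and kM_feat: "\<And>a b. kM a b = inner (tauM a) (tauM b)"
    and kX_feat: "\<And>a b. kX a b = inner (tauX a) (tauX b)"
    and M_rkhs: "closure (span (range tauM)) = UNIV"
    and X_rkhs: "closure (span (range tauX)) = UNIV"
    \<comment> \<open>(A5)\<close>
    and A5_1: "integrable P (\<lambda>w. kM (M w) (M w))"
    and A5_2: "integrable P (\<lambda>w. sqrt (kM (M w) (M w)) * norm (VI w))"
    and A5_3: "integrable P (\<lambda>w. kX (X w) (X w))"
    and A5_4: "integrable P (\<lambda>w. sqrt (kX (X w) (X w)) * norm (VD w))"
    and A5_5: "integrable P (\<lambda>w. sqrt (kX (X w) (X w)) * norm (tauM (M w)))"
  defines "muM \<equiv> integral\<^sup>L P (\<lambda>w. tauM (M w))"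
    and "SMM \<equiv> cov P (\<lambda>w. tauM (M w)) (\<lambda>w. tauM (M w))"
    and "SXX \<equiv> cov P (\<lambda>w. tauX (X w)) (\<lambda>w. tauX (X w))"
    and "SXM \<equiv> cov P (\<lambda>w. tauX (X w)) (\<lambda>w. tauM (M w))"
    and "SMV \<equiv> cov P (\<lambda>w. tauM (M w)) VI"
    and "SXV \<equiv> cov P (\<lambda>w. tauX (X w)) VD"
  assumes A6_1: "range SXM \<subseteq> range SXX" and A6_2: "range SXV \<subseteq> range SXX"
    and A6_3: "range (adjoint SXM) \<subseteq> range SMM" and A6_4: "range SMV \<subseteq> range SMM"
    and A6_5: "bounded_linear (\<lambda>a. pinv SXX (SXM a))"
    and A6_6: "bounded_linear (\<lambda>v. pinv SXX (SXV v))"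
    and A6_7: "bounded_linear (\<lambda>v. pinv SMM (SMV v))"
  defines "RMV \<equiv> (\<lambda>v. pinv SMM (SMV v))"
  defines "lam \<equiv> (\<lambda>m. riesz_rep (\<lambda>v. inner (RMV v) (tauM m)))"
  defines "Psi \<equiv> (\<lambda>m. integral\<^sup>L P VI + lam m - integral\<^sup>L P (\<lambda>w. lam (M w)))"
  shows "(\<forall>m v. inner (Psi m) v
              = inner (integral\<^sup>L P VI) v + inner (RMV v) (tauM m)
                - integral\<^sup>L P (\<lambda>w. inner (RMV v) (tauM (M w))))
    \<and> (\<forall>m. Psi m = integral\<^sup>L P VI + adjoint RMV (tauM m - muM))
    \<and> (\<forall>m. tauM m - muM \<in> pinv_dom SMM \<longrightarrow>
              Psi m = integral\<^sup>L P VI + adjoint SMV (pinv SMM (tauM m - muM)))"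
proof -
  interpret prob_space P by (rule P)
  have kpos: "kM a a \<ge> 0" for a by (simp add: kM_feat)
  have nt: "norm (tauM a) = sqrt (kM a a)" for a by (simp add: kM_feat norm_eq_sqrt_inner)
  have nt2: "norm (tauM a)^2 = kM a a" for a by (simp add: kM_feat power2_norm_eq_inner)
  have tau_cont: "continuous_on UNIV tauM"
  proof -
    have "isCont tauM a" for a
    proof -
      define g where "g = (\<lambda>x. kM x x - 2 * kM x a + kM a a)"
      have c1: "continuous_on UNIV (\<lambda>x. kM x x)"
        using continuous_on_compose2[OF kM_cont continuous_on_Pair[OF continuous_on_id continuous_on_id]]
        by simp
      have c2: "continuous_on UNIV (\<lambda>x. kM x a)"
        using continuous_on_compose2[OF kM_cont continuous_on_Pair[OF continuous_on_id continuous_on_const]]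
        by simp
      have "continuous_on UNIV g" unfolding g_def by (intro continuous_intros c1 c2)
      then have "(g \<longlongrightarrow> g a) (at a)" by (simp add: continuous_on_def)
      moreover have "g a = 0" by (simp add: g_def)
      ultimately have "((\<lambda>x. sqrt (g x)) \<longlongrightarrow> sqrt 0) (at a)" by (intro tendsto_intros) auto
      moreover have "sqrt (g x) = norm (tauM x - tauM a)" for x
        unfolding g_def kM_feat norm_eq_sqrt_inner
        by (simp add: inner_diff inner_commute)
      ultimately have "((\<lambda>x. norm (tauM x - tauM a)) \<longlongrightarrow> 0) (at a)" by simp
      then have "((\<lambda>x. tauM x - tauM a) \<longlongrightarrow> 0) (at a)" by (simp add: tendsto_norm_zero_iff)
      then show "isCont tauM a" by (simp add: isCont_def LIM_zero_iff)
    qed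
    then show ?thesis by (simp add: continuous_at_imp_continuous_on)
  qed
  have tM_meas[measurable]: "(\<lambda>w. tauM (M w)) \<in> borel_measurable P"
    using measurable_compose[OF M_meas borel_measurable_continuous_onI[OF tau_cont]] by simp
  have I1: "integrable P (\<lambda>w. tauM (M w))"
  proof (rule Bochner_Integration.integrable_bound[of P "\<lambda>w. 1 + kM (M w) (M w)"])
    show "integrable P (\<lambda>w. 1 + kM (M w) (M w))" using A5_1 by simp
    show "AE w in P. norm (tauM (M w)) \<le> norm (1 + kM (M w) (M w))"
    proof (rule AE_I2)
      fix w
      let ?k = "kM (M w) (M w)"
      have "?k \<le> (1 + ?k)^2" using kpos[of "M w"] by (simp add: power2_eq_square algebra_simps)
      then have "sqrt ?k \<le> sqrt ((1 + ?k)^2)" by (rule real_sqrt_le_mono)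
      then show "norm (tauM (M w)) \<le> norm (1 + ?k)" by (simp add: nt)
    qed
  qed simp
  have VI_meas'[measurable]: "VI \<in> borel_measurable P" by (rule VI_meas)
  define EV where "EV = integral\<^sup>L P VI"
  define Aw where "Aw = (\<lambda>w. tauM (M w) - muM)"
  define Cw where "Cw = (\<lambda>w. VI w - EV)"
  have Aw_meas[measurable]: "Aw \<in> borel_measurable P" unfolding Aw_def by measurable
  have Cw_meas[measurable]: "Cw \<in> borel_measurable P" unfolding Cw_def by measurable
  have nA: "norm (Aw w) \<le> norm (tauM (M w)) + norm muM" for w
    unfolding Aw_def by (rule norm_triangle_ineq4)
  have nC: "norm (Cw w) \<le> norm (VI w) + norm EV" for w
    unfolding Cw_def by (rule norm_triangle_ineq4)
  have iN: "integrable P (\<lambda>w. norm (tauM (M w)))" using I1 by simp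
  have iV: "integrable P (\<lambda>w. norm (VI w))" using VI_int by simp
  have iK: "integrable P (\<lambda>w. norm (tauM (M w)) * norm (tauM (M w)))"
    using A5_1 by (simp add: nt2[symmetric] power2_eq_square)
  have iKV: "integrable P (\<lambda>w. norm (tauM (M w)) * norm (VI w))"
    using A5_2 by (simp add: nt)
  have iAA: "integrable P (\<lambda>w. norm (Aw w) * norm (Aw w))"
  proof (rule Bochner_Integration.integrable_bound[of P "\<lambda>w. 2 * (norm (tauM (M w)) * norm (tauM (M w))) + 2 * norm muM ^ 2"])
    show "integrable P (\<lambda>w. 2 * (norm (tauM (M w)) * norm (tauM (M w))) + 2 * norm muM ^ 2)"
      using iK by simp
    show "AE w in P. norm (norm (Aw w) * norm (Aw w))
       \<le> norm (2 * (norm (tauM (M w)) * norm (tauM (M w))) + 2 * norm muM ^ 2)"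
    proof (rule AE_I2)
      fix w
      have "norm (Aw w) * norm (Aw w) \<le> (norm (tauM (M w)) + norm muM) * (norm (tauM (M w)) + norm muM)"
        using nA[of w] by (intro mult_mono) auto
      also have "\<dots> \<le> 2 * (norm (tauM (M w)) * norm (tauM (M w))) + 2 * norm muM ^ 2"
      proof -
        have "0 \<le> (norm (tauM (M w)) - norm muM)^2" by simp
        then show ?thesis by (simp add: power2_eq_square algebra_simps)
      qed
      finally show "norm (norm (Aw w) * norm (Aw w))
       \<le> norm (2 * (norm (tauM (M w)) * norm (tauM (M w))) + 2 * norm muM ^ 2)" by simp
    qed
  qed measurable
  have iAC: "integrable P (\<lambda>w. norm (Aw w) * norm (Cw w))"
  proof (rule Bochner_Integration.integrable_bound[of P "\<lambda>w. norm (tauM (M w)) * norm (VI w) + norm (tauM (M w)) * norm EV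
        + norm muM * norm (VI w) + norm muM * norm EV"])
    show "integrable P (\<lambda>w. norm (tauM (M w)) * norm (VI w) + norm (tauM (M w)) * norm EV
        + norm muM * norm (VI w) + norm muM * norm EV)"
    proof -
      have a: "integrable P (\<lambda>w. norm (tauM (M w)) * norm EV)" using iN by (rule integrable_mult_left) 
      have b: "integrable P (\<lambda>w. norm muM * norm (VI w))" using iV by (rule integrable_mult_right)
      show ?thesis by (rule Bochner_Integration.integrable_add[OF Bochner_Integration.integrable_add[OF Bochner_Integration.integrable_add[OF iKV a] b]]) simp
    qed
    show "AE w in P. norm (norm (Aw w) * norm (Cw w)) \<le> norm (norm (tauM (M w)) * norm (VI w) + norm (tauM (M w)) * norm EV
        + norm muM * norm (VI w) + norm muM * norm EV)"
    proof (rule AE_I2)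
      fix w
      have "norm (Aw w) * norm (Cw w) \<le> (norm (tauM (M w)) + norm muM) * (norm (VI w) + norm EV)"
        using nA[of w] nC[of w] by (intro mult_mono) auto
      also have "\<dots> = norm (tauM (M w)) * norm (VI w) + norm (tauM (M w)) * norm EV
        + norm muM * norm (VI w) + norm muM * norm EV" by (simp add: distrib_left distrib_right)
      finally have le: "norm (Aw w) * norm (Cw w) \<le> norm (tauM (M w)) * norm (VI w) + norm (tauM (M w)) * norm EV
        + norm muM * norm (VI w) + norm muM * norm EV" .
      have "0 \<le> norm (Aw w) * norm (Cw w)" by simp
      then show "norm (norm (Aw w) * norm (Cw w)) \<le> norm (norm (tauM (M w)) * norm (VI w) + norm (tauM (M w)) * norm EV
        + norm muM * norm (VI w) + norm muM * norm EV)"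
        using le by (simp only: real_norm_def)
    qed
  qed measurable
  have iCA: "integrable P (\<lambda>w. norm (Cw w) * norm (Aw w))" using iAC by (simp add: mult.commute)
  have I2: "integrable P (\<lambda>w. inner (Aw w) h *\<^sub>R Aw w)" for h
    by (rule rank1_int[OF Aw_meas Aw_meas iAA])
  have I3: "integrable P (\<lambda>w. inner (Aw w) x *\<^sub>R Cw w)" for x
    by (rule rank1_int[OF Aw_meas Cw_meas iAC])
  have I4: "integrable P (\<lambda>w. inner (Cw w) x *\<^sub>R Aw w)" for x
    by (rule rank1_int[OF Cw_meas Aw_meas iCA])
  have SMM_eq: "SMM h = integral\<^sup>L P (\<lambda>w. inner (Aw w) h *\<^sub>R Aw w)" for h
    unfolding SMM_def cov_def Aw_def muM_def by simp
  have SMV_eq: "SMV h = integral\<^sup>L P (\<lambda>w. inner (Cw w) h *\<^sub>R Aw w)" for h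
    unfolding SMV_def cov_def Aw_def Cw_def muM_def EV_def by simp
  have SMM_lin: "linear SMM"
  proof (rule linearI)
    fix x y
    show "SMM (x + y) = SMM x + SMM y" unfolding SMM_eq
      using Bochner_Integration.integral_add[OF I2[of x] I2[of y]] by (simp add: inner_add_right scaleR_add_left)
  next
    fix c x
    show "SMM (c *\<^sub>R x) = c *\<^sub>R SMM x" unfolding SMM_eq using integral_scaleR_right[where c=c and f="\<lambda>w. inner (Aw w) x *\<^sub>R Aw w" and M=P] by simp
  qed
  have SMM_sa: "inner (SMM x) y = inner x (SMM y)" for x y
  proof -
    have "inner (SMM x) y = integral\<^sup>L P (\<lambda>w. inner (Aw w) x * inner (Aw w) y)"
      unfolding SMM_eq using integral_inner_left[of y P "\<lambda>w. inner (Aw w) x *\<^sub>R Aw w"] I2[of x] by simp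
    moreover have "inner x (SMM y) = integral\<^sup>L P (\<lambda>w. inner (Aw w) y * inner x (Aw w))"
      unfolding SMM_eq using integral_inner_right[of x P "\<lambda>w. inner (Aw w) y *\<^sub>R Aw w"] I2[of y] by simp
    ultimately show ?thesis by (simp add: inner_commute mult.commute)
  qed
  define G where "G = (\<lambda>x. integral\<^sup>L P (\<lambda>w. inner (Aw w) x *\<^sub>R Cw w))"
  have SMV_G: "inner (SMV v) x = inner v (G x)" for v x
  proof -
    have "inner (SMV v) x = integral\<^sup>L P (\<lambda>w. inner (Cw w) v * inner (Aw w) x)"
      unfolding SMV_eq using integral_inner_left[of x P "\<lambda>w. inner (Cw w) v *\<^sub>R Aw w"] I4[of v] by simp
    moreover have "inner v (G x) = integral\<^sup>L P (\<lambda>w. inner (Aw w) x * inner v (Cw w))"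
      unfolding G_def using integral_inner_right[of v P "\<lambda>w. inner (Aw w) x *\<^sub>R Cw w"] I3[of x] by simp
    ultimately show ?thesis by (simp add: inner_commute mult.commute)
  qed
  have adjSMV: "adjoint SMV = G" by (rule adjoint_unique) (use SMV_G in blast)
  have RMV_bl: "bounded_linear RMV" unfolding RMV_def by (rule A6_7)
  define Ad where "Ad = adjoint RMV"
  have Ad: "inner (RMV x) y = inner x (Ad y)" for x y using adjoint_ex[OF RMV_bl] unfolding Ad_def by blast
  have Ad_bl: "bounded_linear Ad" unfolding Ad_def by (rule adjoint_bl[OF RMV_bl])
  interpret Ad: bounded_linear Ad by (rule Ad_bl)
  have lam_eq: "lam m = Ad (tauM m)" for m
    unfolding lam_def riesz_rep_def
  proof (rule the_equality)
    show "\<forall>v. inner (Ad (tauM m)) v = inner (RMV v) (tauM m)" by (simp add: Ad inner_commute)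
  next
    fix l assume l: "\<forall>v. inner l v = inner (RMV v) (tauM m)"
    show "l = Ad (tauM m)" by (rule inner_ext) (metis l Ad inner_commute)
  qed
  have int_lam: "integral\<^sup>L P (\<lambda>w. lam (M w)) = Ad muM"
    unfolding lam_eq muM_def by (rule integral_bounded_linear[OF Ad_bl I1])
  have Psi_eq: "Psi m = EV + Ad (tauM m - muM)" for m
    using int_lam unfolding Psi_def lam_eq EV_def by (simp add: Ad.diff)
  have part1: "\<forall>m v. inner (Psi m) v
              = inner (integral\<^sup>L P VI) v + inner (RMV v) (tauM m)
                - integral\<^sup>L P (\<lambda>w. inner (RMV v) (tauM (M w)))"
  proof (intro allI)
    fix m v
    have "integral\<^sup>L P (\<lambda>w. inner (RMV v) (tauM (M w))) = inner (RMV v) muM"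
      unfolding muM_def using I1 by simp
    moreover have "inner (Ad (tauM m - muM)) v = inner (RMV v) (tauM m - muM)"
      using Ad[of v "tauM m - muM"] by (metis inner_commute)
    ultimately show "inner (Psi m) v
              = inner (integral\<^sup>L P VI) v + inner (RMV v) (tauM m)
                - integral\<^sup>L P (\<lambda>w. inner (RMV v) (tauM (M w)))"
      unfolding Psi_eq EV_def by (simp add: inner_add_left inner_diff_right)
  qed
  have part3: "\<forall>m. tauM m - muM \<in> pinv_dom SMM \<longrightarrow>
              Psi m = integral\<^sup>L P VI + adjoint SMV (pinv SMM (tauM m - muM))"
  proof (intro allI impI)
    fix m
    define y where "y = tauM m - muM"
    assume "tauM m - muM \<in> pinv_dom SMM"
    then obtain x2 where x2: "x2 \<in> closure (range SMM)" "\<forall>z. inner (y - SMM x2) (SMM z) = 0"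
      unfolding pinv_dom_def y_def by blast
    have px2: "pinv SMM y = x2" by (rule pinv_char[OF SMM_lin SMM_sa x2])
    have "Ad y = G x2"
    proof (rule inner_ext)
      fix v
      have "SMV v \<in> range SMM" using A6_4 by blast
      then obtain a where a: "SMV v = SMM a" by blast
      define x1 where "x1 = pinv SMM (SMM a)"
      have x1: "SMM x1 = SMV v" "x1 \<in> closure (range SMM)"
        using pinv_range[OF SMM_lin SMM_sa, of a] a unfolding x1_def by auto
      have R: "RMV v = x1" unfolding RMV_def x1_def a ..
      have perp: "\<forall>s\<in>range SMM. inner (y - SMM x2) s = 0" using x2(2) by auto
      have z: "inner (y - SMM x2) x1 = 0" by (rule perp_closure[OF perp x1(2)])
      have "inner v (Ad y) = inner x1 y" using Ad[of v y] R by simp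
      also have "\<dots> = inner x1 (SMM x2) + inner (y - SMM x2) x1"
        by (simp add: inner_diff inner_commute)
      also have "\<dots> = inner (SMV v) x2" using z SMM_sa[of x1 x2] x1(1) by simp
      also have "\<dots> = inner v (G x2)" by (rule SMV_G)
      finally show "inner v (Ad y) = inner v (G x2)" .
    qed
    then show "Psi m = integral\<^sup>L P VI + adjoint SMV (pinv SMM (tauM m - muM))"
      unfolding Psi_eq adjSMV EV_def using px2 y_def by simp
  qed
  have part2: "\<forall>m. Psi m = integral\<^sup>L P VI + adjoint RMV (tauM m - muM)"
    using Psi_eq unfolding Ad_def EV_def by blast
  show ?thesis by (intro conjI part1 part2 part3)
qed

end
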